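(* There exist a polynomial $p$ and a constant $c>0$ such that for every integer $k\geq 1$ there exist an approval election $E=(N,C,(A_v)_{v\in N},k)$ with $|N|\le p(k)$ voters, a committee $W_0\subseteq C$ with $|W_0|=k$, and a valid sequence of swaps $(a_1,b_1),\dots,(a_s,b_s)$ starting from $W_0$ with $s\ge c\,k^2$ (i.e., of length $\Omega(k^2)$) such that every swap in the sequence increases the PAV score by at least $\frac{n}{k^2}$, where $n=|N|$; that is, $\Delta(W_{t-1},a_t,b_t)\ge \frac{n}{k^2}$ for all $t\in[s]$.
   Context: An approval election is a tuple $E=(N,C,(A_v)_{v\in N},k)$ where $N=[n]$ is a set of voters, $C$ is a finite set of candidates, $A_v\subseteq C$ is the approval ballot of voter $v$, and $k\in[|C|]$ is the target committee size. A committee is a subset of $C$. The PAV score of a committee $W$ is $\textsc{pavsc}(W)=\sum_{v\in N}\sum_{j=1}^{|A_v\cap W|}\frac{1}{j}$. For $a\in W$, $b\notin W$, let $\Delta(W,a,b)=\textsc{pavsc}((W\setminus\{a\})\cup\{b\})-\textsc{pavsc}(W)$. A sequence of swaps $(a_1,b_1),\dots,(a_s,b_s)$ is valid starting from $W_0$ if, setting $W_t=(W_{t-1}\cup\{b_t\})\setminus\{a_t\}$, we have $a_t\in W_{t-1}$ and $b_t\notin W_{t-1}$ for every $t\in[s]$. *)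

theory Defs
  imports Complex_Main "HOL-Computational_Algebra.Polynomial"
begin

definition approval_election :: "nat \<Rightarrow> 'c set \<Rightarrow> (nat \<Rightarrow> 'c set) \<Rightarrow> nat \<Rightarrow> bool" where
  "approval_election n C A k \<longleftrightarrow>
     finite C \<and> (\<forall>v<n. A v \<subseteq> C) \<and> 1 \<le> k \<and> k \<le> card C"

definition pavsc :: "nat \<Rightarrow> (nat \<Rightarrow> 'c set) \<Rightarrow> 'c set \<Rightarrow> real" where
  "pavsc n A W = (\<Sum>v<n. \<Sum>j=1..card (A v \<inter> W). 1 / real j)"

definition swap_delta :: "nat \<Rightarrow> (nat \<Rightarrow> 'c set) \<Rightarrow> 'c set \<Rightarrow> 'c \<Rightarrow> 'c \<Rightarrow> real" where
  "swap_delta n A W a b = pavsc n A ((W - {a}) \<union> {b}) - pavsc n A W"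

fun committee_seq :: "'c set \<Rightarrow> ('c \<times> 'c) list \<Rightarrow> nat \<Rightarrow> 'c set" where
  "committee_seq W0 sw 0 = W0"
| "committee_seq W0 sw (Suc t) =
     (committee_seq W0 sw t \<union> {snd (sw ! t)}) - {fst (sw ! t)}"

definition valid_swaps :: "'c set \<Rightarrow> ('c \<times> 'c) list \<Rightarrow> bool" where
  "valid_swaps W0 sw \<longleftrightarrow>
     (\<forall>t<length sw. fst (sw ! t) \<in> committee_seq W0 sw t \<and>
                    snd (sw ! t) \<notin> committee_seq W0 sw t)"

end

theory Submission
  imports Defs
begin

lemma cs_closed:
  assumes "S 0 = W0" "\<And>t. Suc t < L \<Longrightarrow> S (Suc t) = (S t \<union> {snd (f t)}) - {fst (f t)}"
  shows "t < L \<Longrightarrow> committee_seq W0 (map f [0..<L]) t = S t"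
  by (induction t) (auto simp: assms)

definition AA :: "nat \<Rightarrow> nat \<Rightarrow> nat set" where
  "AA k v = (if v mod k \<le> v div k then {v div k + 1} else {})"

lemma inner: "(\<Sum>j=1..card (AA k v \<inter> W). 1 / real j) =
   (if v mod k \<le> v div k \<and> v div k + 1 \<in> W then 1 else 0)"
  by (auto simp: AA_def)

lemma cnt:
  assumes "x \<le> k"
  shows "card {v \<in> {..<k*k}. v mod k \<le> v div k \<and> v div k + 1 = x} = x"
proof (cases x)
  case 0 then show ?thesis by simp
next
  case (Suc y)
  have "{v \<in> {..<k*k}. v mod k \<le> v div k \<and> v div k + 1 = x} = (\<lambda>j. y*k + j) ` {..<x}"
  proof (intro equalityI subsetI)
    fix v assume "v \<in> {v \<in> {..<k*k}. v mod k \<le> v div k \<and> v div k + 1 = x}"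
    then have "v mod k \<le> y" "v div k = y" using Suc by auto
    then have "v = y*k + v mod k" by (metis div_mult_mod_eq)
    then show "v \<in> (\<lambda>j. y*k + j) ` {..<x}" using \<open>v mod k \<le> y\<close> Suc by (intro image_eqI[of _ _ "v mod k"]) auto
  next
    fix v assume "v \<in> (\<lambda>j. y*k + j) ` {..<x}"
    then obtain j where j: "j < x" "v = y*k + j" by auto
    have jk: "j < k" using j assms by simp
    have "v div k = y" "v mod k = j" using j jk by auto
    moreover have "v < k*k"
    proof -
      have "y*k + j < y*k + k" using jk by simp
      also have "\<dots> = (y+1)*k" by simp
      also have "\<dots> \<le> k*k" using Suc assms mult_le_mono1[of "Suc y" k k] by simp
      finally show ?thesis using j by simp
    qed
    ultimately show "v \<in> {v \<in> {..<k*k}. v mod k \<le> v div k \<and> v div k + 1 = x}"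
      using j Suc by auto
  qed
  then show ?thesis by (simp add: card_image inj_on_def)
qed

lemma sum_ind: "(\<Sum>v<(n::nat). (if P v then 1 else 0::real)) = real (card {v \<in> {..<n}. P v})"
proof -
  have "(\<Sum>v<n. (if P v then 1 else 0::real)) = (\<Sum>v\<in>{..<n} \<inter> {v. P v}. 1)"
    using sum.If_cases[OF finite_lessThan, of P "\<lambda>_. 1::real" "\<lambda>_. 0" n] by simp
  also have "{..<n} \<inter> {v. P v} = {v \<in> {..<n}. P v}" by auto
  finally show ?thesis by simp
qed

lemma delta:
  assumes "a \<in> W" "b \<notin> W" "a \<le> k" "b \<le> k"
  shows "swap_delta (k*k) (AA k) W a b = real b - real a"
proof -
  let ?P = "\<lambda>W v. v mod k \<le> v div k \<and> v div k + 1 \<in> W"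
  have e: "(if ?P (W - {a} \<union> {b}) v then 1 else 0::real) - (if ?P W v then 1 else 0)
      = (if v mod k \<le> v div k \<and> v div k + 1 = b then 1 else 0) - (if v mod k \<le> v div k \<and> v div k + 1 = a then 1 else 0)" for v
    using assms by auto
  have "swap_delta (k*k) (AA k) W a b = (\<Sum>v<k*k. (if ?P (W - {a} \<union> {b}) v then 1 else 0::real) - (if ?P W v then 1 else 0))"
    unfolding swap_delta_def pavsc_def inner by (simp add: sum_subtractf)
  also have "\<dots> = (\<Sum>v<k*k. (if v mod k \<le> v div k \<and> v div k + 1 = b then 1 else 0::real)) - (\<Sum>v<k*k. (if v mod k \<le> v div k \<and> v div k + 1 = a then 1 else 0))"
    unfolding e by (simp add: sum_subtractf)
  also have "\<dots> = real b - real a" unfolding sum_ind using cnt assms by simp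
  finally show ?thesis .
qed

definition TT :: "nat \<Rightarrow> nat \<Rightarrow> nat \<Rightarrow> nat \<Rightarrow> nat \<Rightarrow> nat set" where
  "TT k d q s j = {k+1..<k+1+d} \<union> {..<s} \<union> {s+j} \<union> {s+q<..k}"

lemma TT_step_in:
  assumes "j < q" "s + q \<le> k"
  shows "s + j \<in> TT k d q s j" "s + j + 1 \<notin> TT k d q s j"
  using assms by (auto simp: TT_def)

lemma TT_step_same:
  assumes "j + 1 < q" "s + q \<le> k"
  shows "TT k d q s (j+1) = (TT k d q s j \<union> {s+j+1}) - {s+j}"
  using assms by (auto simp: TT_def)

lemma TT_step_next:
  assumes "j + 1 = q" "s + q \<le> k" "s \<ge> 1"
  shows "TT k d q (s-1) 0 = (TT k d q s j \<union> {s+j+1}) - {s+j}"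
  using assms by (auto simp: TT_def)

theorem theorem2:
  "\<exists>(p :: real poly) (c :: real). c > 0 \<and>
     (\<forall>k::nat. k \<ge> 1 \<longrightarrow>
       (\<exists>(n::nat) (C :: nat set) (A :: nat \<Rightarrow> nat set) (W0 :: nat set) (sw :: (nat \<times> nat) list).
          n \<ge> 1 \<and> approval_election n C A k \<and> real n \<le> poly p (real k) \<and>
          W0 \<subseteq> C \<and> card W0 = k \<and>
          valid_swaps W0 sw \<and> real (length sw) \<ge> c * (real k)^2 \<and>
          (\<forall>t<length sw.
             swap_delta n A (committee_seq W0 sw t) (fst (sw ! t)) (snd (sw ! t))
               \<ge> real n / (real k)^2)))"
proof (intro exI[of _ "[:0,0,1:]"] exI[of _ "1/4"] conjI allI impI)
  show "(0::real) < 1/4" by simp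
  fix k :: nat assume k1: "k \<ge> 1"
  define r where "r = (k+1) div 2"
  define q where "q = k + 1 - r"
  define d where "d = k - r"
  have r1: "r \<ge> 1" and rk: "r \<le> k" and q1: "q \<ge> 1" and qk: "r - 1 + q = k"
    and r2: "2*r \<ge> k" and q2: "2*q \<ge> k+1"
    using k1 unfolding r_def q_def by auto
  define D where "D = {k+1..<k+1+d}"
  define W0 where "W0 = D \<union> {..<r}"
  define C where "C = {..<2*k+1}"
  define S where "S t = TT k d q (r-1-t div q) (t mod q)" for t
  define f where "f t = (r-1-t div q + t mod q, r-1-t div q + t mod q + 1)" for t
  define sw where "sw = map f [0..<r*q]"
  have S0: "S 0 = W0" using qk r1 unfolding S_def W0_def D_def TT_def by auto
  have key: "fst (f t) \<in> S t \<and> snd (f t) \<notin> S t \<and> fst (f t) \<le> k \<and> snd (f t) \<le> k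
     \<and> (Suc t < r*q \<longrightarrow> S (Suc t) = (S t \<union> {snd (f t)}) - {fst (f t)})" if t: "t < r*q" for t
  proof -
    define p where "p = t div q"
    define j where "j = t mod q"
    define s where "s = r - 1 - p"
    have pr: "p < r" using t q1 unfolding p_def by (simp add: less_mult_imp_div_less)
    have jq: "j < q" using q1 unfolding j_def by simp
    have sq: "s + q \<le> k" using qk pr unfolding s_def by simp
    have ft: "f t = (s + j, s + j + 1)" unfolding f_def s_def p_def j_def by simp
    have St: "S t = TT k d q s j" unfolding S_def s_def p_def j_def by simp
    have A: "fst (f t) \<in> S t" "snd (f t) \<notin> S t" using TT_step_in[OF jq sq] ft St by auto
    have B: "fst (f t) \<le> k" "snd (f t) \<le> k" using ft jq sq by auto
    have C: "S (Suc t) = (S t \<union> {snd (f t)}) - {fst (f t)}" if st: "Suc t < r*q"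
    proof (cases "j + 1 < q")
      case True
      then have "Suc t div q = p" "Suc t mod q = j + 1"
        unfolding p_def j_def by (auto simp: div_Suc mod_Suc)
      then have "S (Suc t) = TT k d q s (j+1)" unfolding S_def s_def by simp
      then show ?thesis using TT_step_same[OF True sq] ft St by simp
    next
      case False
      then have jq': "j + 1 = q" using jq by simp
      then have e: "Suc t div q = p + 1" "Suc t mod q = 0"
        unfolding p_def j_def by (auto simp: div_Suc mod_Suc)
      have "Suc t = (p+1) * q" using e by (metis add.right_neutral div_mult_mod_eq)
      then have "p + 1 < r" using st by (metis mult_less_cancel2)
      then have s1: "s \<ge> 1" unfolding s_def by simp
      have "S (Suc t) = TT k d q (s-1) 0" using e unfolding S_def s_def by simp
      then show ?thesis using TT_step_next[OF jq' sq s1] ft St by simp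
    qed
    show ?thesis using A B C by blast
  qed
  have cs: "committee_seq W0 sw t = S t" if "t < length sw" for t
    using cs_closed[of S W0 "r*q" f t] S0 key that unfolding sw_def by auto
  have swt: "sw ! t = f t" if "t < length sw" for t using that unfolding sw_def by simp
  have len: "length sw = r * q" unfolding sw_def by simp
  show "\<exists>(n::nat) (C :: nat set) (A :: nat \<Rightarrow> nat set) (W0 :: nat set) (sw :: (nat \<times> nat) list).
          n \<ge> 1 \<and> approval_election n C A k \<and> real n \<le> poly [:0,0,1:] (real k) \<and>
          W0 \<subseteq> C \<and> card W0 = k \<and>
          valid_swaps W0 sw \<and> real (length sw) \<ge> 1/4 * (real k)^2 \<and>
          (\<forall>t<length sw.
             swap_delta n A (committee_seq W0 sw t) (fst (sw ! t)) (snd (sw ! t))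
               \<ge> real n / (real k)^2)"
  proof (rule exI[of _ "k*k"], rule exI[of _ C], rule exI[of _ "AA k"], rule exI[of _ W0], rule exI[of _ sw], intro conjI)
    show "1 \<le> k*k" using k1 by simp
    have "AA k v \<subseteq> C" if "v < k*k" for v
    proof -
      have "v div k < k" using that by (simp add: less_mult_imp_div_less)
      then show ?thesis unfolding AA_def C_def by auto
    qed
    then show "approval_election (k*k) C (AA k) k"
      unfolding approval_election_def C_def using k1 by auto
    show "real (k*k) \<le> poly [:0,0,1:] (real k)" by simp
    show "W0 \<subseteq> C" using rk by (auto simp: W0_def D_def C_def d_def)
    have "card W0 = card D + card {..<r}" unfolding W0_def D_def
      using rk by (intro card_Un_disjoint) auto
    then show "card W0 = k" unfolding D_def d_def using rk by simp
    show "valid_swaps W0 sw" unfolding valid_swaps_def using cs swt key len by auto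
    have "real k * real k \<le> 4 * (real r * real q)"
    proof -
      have "real k \<le> 2 * real r" using r2 by linarith
      moreover have "real k \<le> 2 * real q" using q2 by linarith
      ultimately have "real k * real k \<le> (2 * real r) * (2 * real q)"
        by (intro mult_mono) auto
      then show ?thesis by simp
    qed
    then show "1/4 * (real k)^2 \<le> real (length sw)" unfolding len by (simp add: power2_eq_square)
    show "\<forall>t<length sw. real (k*k) / (real k)^2 \<le> swap_delta (k*k) (AA k) (committee_seq W0 sw t) (fst (sw ! t)) (snd (sw ! t))"
    proof (intro allI impI)
      fix t assume tl: "t < length sw"
      then have kt: "fst (f t) \<in> S t" "snd (f t) \<notin> S t" "fst (f t) \<le> k" "snd (f t) \<le> k"
        using key len by auto
      have "swap_delta (k*k) (AA k) (committee_seq W0 sw t) (fst (sw ! t)) (snd (sw ! t))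
          = real (snd (f t)) - real (fst (f t))"
        unfolding cs[OF tl] swt[OF tl] by (rule delta[OF kt])
      also have "\<dots> = 1" unfolding f_def by simp
      finally show "real (k*k) / (real k)^2 \<le> swap_delta (k*k) (AA k) (committee_seq W0 sw t) (fst (sw ! t)) (snd (sw ! t))"
        using k1 by (simp add: power2_eq_square)
    qed
  qed
qed

end
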